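(* For each fixed $t>0$ the function $x\mapsto h(x,t)$ is concave on $x>0$. Moreover $\mu/\rho-u_0+h(x,t)\le e^{\rho t}[x-u_0+\mu/\rho]$ for $x\ge u_0$, and $h(x,t)\le e^{\rho t}V_0(x)$ for $x\ge0$.
   Context: Fix $\mu,\sigma,\rho>0$. $A=\frac12\sigma^2\frac{d^2}{dx^2}+\mu\frac{d}{dx}$ is the generator of $X(t)=X(0)+\mu t+\sigma W(t)$, $W$ standard Brownian motion. Let $r_1=(-\mu+\sqrt{\mu^2+2\sigma^2\rho})/\sigma^2$, $r_2=(\mu+\sqrt{\mu^2+2\sigma^2\rho})/\sigma^2$, $u_0=\frac{1}{r_1+r_2}\ln\frac{\rho+\mu r_2}{\rho-\mu r_1}$, and $V_0:\mathbf{R}\to\mathbf{R}$ the solution of $(A-\rho)V_0=0$ with $V_0(u_0)=\mu/\rho$, $V_0'(u_0)=1$ (so $V_0(0)=0$). For $x>0$ let $\tau_x$ be the first hitting time of $0$ by $X$ started at $x$ and $p(x,t)=P(\tau_x<t)$. $h(x,t)$, $x>0,t>0$, is the solution of $\partial h/\partial t=Ah$ with $h(0,t)=0$, $h(x,0)=x$; equivalently $h(x,t)=x+\mu t-\mu\int_0^tp(x,s)ds$. *)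

theory Defs
  imports "HOL-Probability.Probability"
begin

definition Phi :: "real \<Rightarrow> real" where
  "Phi z = (LINT y:{..z}|lborel. std_normal_density y)"

text \<open>p(x,t) = P(tau_x < t): law of the first hitting time of 0 by
  X(t) = x + mu t + sg W(t) started at x > 0 (inverse Gaussian law).\<close>
definition hit_cdf :: "real \<Rightarrow> real \<Rightarrow> real \<Rightarrow> real \<Rightarrow> real" where
  "hit_cdf mu sg x t =
     Phi ((- x - mu * t) / (sg * sqrt t))
     + exp (- 2 * mu * x / sg\<^sup>2) * Phi ((- x + mu * t) / (sg * sqrt t))"

definition h :: "real \<Rightarrow> real \<Rightarrow> real \<Rightarrow> real \<Rightarrow> real" where
  "h mu sg x t = x + mu * t - mu * integral {0..t} (\<lambda>s. hit_cdf mu sg x s)"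

definition r1 :: "real \<Rightarrow> real \<Rightarrow> real \<Rightarrow> real" where
  "r1 mu sg rho = (- mu + sqrt (mu\<^sup>2 + 2 * sg\<^sup>2 * rho)) / sg\<^sup>2"

definition r2 :: "real \<Rightarrow> real \<Rightarrow> real \<Rightarrow> real" where
  "r2 mu sg rho = (mu + sqrt (mu\<^sup>2 + 2 * sg\<^sup>2 * rho)) / sg\<^sup>2"

definition u0 :: "real \<Rightarrow> real \<Rightarrow> real \<Rightarrow> real" where
  "u0 mu sg rho = 1 / (r1 mu sg rho + r2 mu sg rho) *
     ln ((rho + mu * r2 mu sg rho) / (rho - mu * r1 mu sg rho))"

definition V0 :: "real \<Rightarrow> real \<Rightarrow> real \<Rightarrow> real \<Rightarrow> real" where
  "V0 mu sg rho = (THE V. \<exists>V' V''.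
      (\<forall>x. (V has_real_derivative V' x) (at x)) \<and>
      (\<forall>x. (V' has_real_derivative V'' x) (at x)) \<and>
      (\<forall>x. sg\<^sup>2 / 2 * V'' x + mu * V' x - rho * V x = 0) \<and>
      V (u0 mu sg rho) = mu / rho \<and> V' (u0 mu sg rho) = 1)"

end

theory Submission
  imports Defs
begin

definition NM :: "real measure" where "NM = density lborel std_normal_density"

lemma NM_real_distribution: "real_distribution NM"
  unfolding NM_def by (rule real_dist_normal_dist)

lemma set_integrable_std_normal: "set_integrable lborel A std_normal_density" if "A \<in> sets borel"
proof -
  have "integrable lborel std_normal_density"
    using integrable_std_normal_moment[of 0] by simp
  then show ?thesis using that unfolding set_integrable_def
    by (intro integrable_mult_indicator) auto
qed

lemma Phi_cdf: "Phi z = cdf NM z"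
proof -
  have "cdf NM z = measure NM {..z}" by (simp add: cdf_def)
  also have "\<dots> = enn2real (\<integral>\<^sup>+x. ennreal (std_normal_density x) * indicator {..z} x \<partial>lborel)"
    unfolding NM_def measure_def by (subst emeasure_density) auto
  also have "\<dots> = Phi z"
    unfolding Phi_def set_lebesgue_integral_def
    apply (subst integral_eq_nn_integral)
      apply (auto intro!: integrable_mult_indicator simp: integrable_std_normal_moment[of 0, simplified])
    apply (rule arg_cong[where f=enn2real])
    by (auto intro!: nn_integral_cong split: split_indicator)
  finally show ?thesis by simp
qed

lemma Phi_nonneg: "0 \<le> Phi z"
  unfolding Phi_cdf by (rule finite_borel_measure.cdf_nonneg[OF real_distribution.finite_borel_measure_M[OF NM_real_distribution]])

lemma Phi_le1: "Phi z \<le> 1"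
  unfolding Phi_cdf by (rule real_distribution.cdf_bounded_prob[OF NM_real_distribution])

lemma Phi_at_bot: "(Phi \<longlongrightarrow> 0) at_bot"
proof -
  have "Phi = cdf NM" using Phi_cdf by auto
  then show ?thesis using finite_borel_measure.cdf_lim_at_bot[OF real_distribution.finite_borel_measure_M[OF NM_real_distribution]] by simp
qed

lemma Phi_at_top: "(Phi \<longlongrightarrow> 1) at_top"
proof -
  have "Phi = cdf NM" using Phi_cdf by auto
  then show ?thesis using real_distribution.cdf_lim_at_top_prob[OF NM_real_distribution] by simp
qed

lemma Phi_split: assumes "a \<le> z" shows "Phi z = Phi a + integral {a..z} std_normal_density"
proof -
  have e: "{..z} = {..a} \<union> {a<..z}" using assms by auto
  have "Phi z = (LINT y:{..a}|lborel. std_normal_density y) + (LINT y:{a<..z}|lborel. std_normal_density y)"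
    unfolding Phi_def e by (rule set_integral_Un) (auto simp: set_integrable_std_normal)
  also have "(LINT y:{a<..z}|lborel. std_normal_density y) = integral {a<..z} std_normal_density"
    by (rule set_borel_integral_eq_integral(2)) (simp add: set_integrable_std_normal)
  also have "\<dots> = integral {a..z} std_normal_density"
    by (rule integral_spike_set) (auto intro: negligible_subset[of "{a}"])
  finally show ?thesis unfolding Phi_def by simp
qed

lemma continuous_std_normal_density: "continuous_on S std_normal_density"
  unfolding normal_density_def by (intro continuous_intros) auto

lemma Phi_deriv: "(Phi has_real_derivative std_normal_density z) (at z)"
proof -
  define a where "a = z - 1"
  have d: "((\<lambda>u. Phi a + integral {a..u} std_normal_density) has_real_derivative std_normal_density z) (at z within {a..z+1})"
    using integral_has_real_derivative[OF continuous_std_normal_density, of z a "z+1"]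
    by (auto intro!: derivative_eq_intros simp: a_def)
  have "((\<lambda>u. Phi a + integral {a..u} std_normal_density) has_real_derivative std_normal_density z) (at z)"
    using d by (subst (asm) at_within_interior[of z]) (auto simp: a_def)
  then show ?thesis
    by (rule has_field_derivative_transform_within_open[where S="{a<..}"]) (auto simp: a_def Phi_split[symmetric])
qed

lemma Phi_deriv_chain[derivative_intros]:
  "(f has_real_derivative f') (at x within S) \<Longrightarrow> ((\<lambda>x. Phi (f x)) has_real_derivative std_normal_density (f x) * f') (at x within S)"
  using DERIV_chain2[OF Phi_deriv] by blast

lemma isCont_Phi: "isCont Phi z"
  using Phi_deriv DERIV_isCont by blast

lemma continuous_on_Phi[continuous_intros]: "continuous_on S f \<Longrightarrow> continuous_on S (\<lambda>x. Phi (f x))"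
  using continuous_on_compose2[of UNIV Phi S f] isCont_Phi continuous_at_imp_continuous_on by blast

lemma Phi_sym: "Phi (- z) + Phi z = 1"
proof -
  have c: "Phi (- z) + Phi z = Phi (- y) + Phi y" for y
  proof (rule DERIV_isconst_all[of "\<lambda>z. Phi (- z) + Phi z", simplified])
    show "\<forall>x. ((\<lambda>z. Phi (- z) + Phi z) has_real_derivative 0) (at x)"
      by (auto intro!: derivative_eq_intros simp: normal_density_def)
  qed
  have eq: "(\<lambda>y. Phi (- y) + Phi y) = (\<lambda>y. Phi (- z) + Phi z)" using c by metis
  have "((\<lambda>y. Phi (- y) + Phi y) \<longlongrightarrow> 1) at_top"
    using tendsto_add[OF filterlim_compose[OF Phi_at_bot filterlim_uminus_at_bot_at_top] Phi_at_top] by simp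
  then have "((\<lambda>y::real. Phi (- z) + Phi z) \<longlongrightarrow> 1) at_top" by (simp only: eq)
  then show ?thesis by (simp add: tendsto_const_iff)
qed

lemma std_normal_deriv: "(std_normal_density has_real_derivative (- z * std_normal_density z)) (at z)"
  unfolding normal_density_def
  by (auto intro!: derivative_eq_intros simp: field_simps power2_eq_square)

lemma std_normal_deriv_chain:
  "(f has_real_derivative f') (at x within S) \<Longrightarrow> ((\<lambda>x. std_normal_density (f x)) has_real_derivative (- f x * std_normal_density (f x)) * f') (at x within S)"
  using DERIV_chain2[OF std_normal_deriv] by blast

definition Hc :: "real \<Rightarrow> real \<Rightarrow> real \<Rightarrow> real \<Rightarrow> real" where
  "Hc mu sg x t = x + mu * t - (x + mu * t) * Phi ((- x - mu * t) / (sg * sqrt t))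
     - exp (- 2 * mu * x / sg\<^sup>2) * (mu * t - x) * Phi ((- x + mu * t) / (sg * sqrt t))"

lemma phi_identity:
  assumes "t > 0" "sg > 0"
  shows "exp (- 2 * mu * x / sg\<^sup>2) * std_normal_density ((- x + mu * t) / (sg * sqrt t))
       = std_normal_density ((- x - mu * t) / (sg * sqrt t))"
proof -
  have st: "sqrt t * sqrt t = t" "sqrt t > 0" using assms by auto
  have "- 2 * mu * x / sg\<^sup>2 + - ((- x + mu * t) / (sg * sqrt t))\<^sup>2 / 2 = - ((- x - mu * t) / (sg * sqrt t))\<^sup>2 / 2"
    using assms st by (simp add: field_simps power2_eq_square)
  then have "exp (- 2 * mu * x / sg\<^sup>2) * exp (- ((- x + mu * t) / (sg * sqrt t))\<^sup>2 / 2) = exp (- ((- x - mu * t) / (sg * sqrt t))\<^sup>2 / 2)"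
    by (simp only: mult_exp_exp)
  then show ?thesis
    unfolding std_normal_density_def by (metis mult.left_commute)
qed

lemma Hc_dt:
  assumes "t > 0" "sg > 0"
  shows "((\<lambda>s. Hc mu sg x s) has_real_derivative (mu - mu * hit_cdf mu sg x t)) (at t)"
proof -
  have st: "sqrt t * sqrt t = t" "sqrt t > 0" using assms by auto
  define c where "c = sg * sqrt t"
  define c' where "c' = sg / (2 * sqrt t)"
  define z where "z = (- x - mu * t) / (sg * sqrt t)"
  define w where "w = (- x + mu * t) / (sg * sqrt t)"
  define E where "E = exp (- 2 * mu * x / sg\<^sup>2)"
  have cpos: "c > 0" using assms st by (simp add: c_def)
  have dz: "((\<lambda>s. (- x - mu * s) / (sg * sqrt s)) has_real_derivative (- mu * c - (- x - mu * t) * c') / c\<^sup>2) (at t)"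
    using assms st cpos
    by (auto intro!: derivative_eq_intros simp: c_def c'_def field_simps power2_eq_square)
  have dw: "((\<lambda>s. (- x + mu * s) / (sg * sqrt s)) has_real_derivative (mu * c - (- x + mu * t) * c') / c\<^sup>2) (at t)"
    using assms st cpos
    by (auto intro!: derivative_eq_intros simp: c_def c'_def field_simps power2_eq_square)
  define zf where "zf = (\<lambda>s. (- x - mu * s) / (sg * sqrt s))"
  define wf where "wf = (\<lambda>s. (- x + mu * s) / (sg * sqrt s))"
  have dz': "(zf has_real_derivative (- mu * c - (- x - mu * t) * c') / c\<^sup>2) (at t)"
    using dz unfolding zf_def .
  have dw': "(wf has_real_derivative (mu * c - (- x + mu * t) * c') / c\<^sup>2) (at t)"
    using dw unfolding wf_def .
  have hc: "(\<lambda>s. Hc mu sg x s) = (\<lambda>s. x + mu * s - (x + mu * s) * Phi (zf s) - E * (mu * s - x) * Phi (wf s))"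
    unfolding Hc_def zf_def wf_def E_def by (simp add: mult.assoc)
  have d: "((\<lambda>s. Hc mu sg x s) has_real_derivative
      mu - (mu * Phi z + (x + mu * t) * (std_normal_density z * ((- mu * c - (- x - mu * t) * c') / c\<^sup>2)))
      - E * (mu * Phi w + (mu * t - x) * (std_normal_density w * ((mu * c - (- x + mu * t) * c') / c\<^sup>2)))) (at t)"
  proof -
    have zw: "zf t = z" "wf t = w" unfolding zf_def wf_def z_def w_def by auto
    show ?thesis unfolding hc
      apply (rule derivative_eq_intros dz' dw' refl)+
      using cpos zw by (simp add: divide_simps) (simp add: algebra_simps)
  qed
  have Ew: "E * std_normal_density w = std_normal_density z"
    unfolding E_def w_def z_def by (rule phi_identity[OF assms])
  have key: "(x + mu * t) * (- mu * c - (- x - mu * t) * c') + (mu * t - x) * (mu * c - (- x + mu * t) * c') = 0"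
    using st assms unfolding c_def c'_def by (simp add: field_simps)
  have "mu - (mu * Phi z + (x + mu * t) * (std_normal_density z * ((- mu * c - (- x - mu * t) * c') / c\<^sup>2)))
      - E * (mu * Phi w + (mu * t - x) * (std_normal_density w * ((mu * c - (- x + mu * t) * c') / c\<^sup>2)))
      = mu - mu * (Phi z + E * Phi w) - std_normal_density z / c\<^sup>2 *
        ((x + mu * t) * (- mu * c - (- x - mu * t) * c') + (mu * t - x) * (mu * c - (- x + mu * t) * c'))"
    using Ew[symmetric] by (simp add: algebra_simps add_divide_distrib diff_divide_distrib)
  also have "\<dots> = mu - mu * hit_cdf mu sg x t"
    unfolding key hit_cdf_def z_def w_def E_def by simp
  finally have eqD: "mu - (mu * Phi z + (x + mu * t) * (std_normal_density z * ((- mu * c - (- x - mu * t) * c') / c\<^sup>2)))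
      - E * (mu * Phi w + (mu * t - x) * (std_normal_density w * ((mu * c - (- x + mu * t) * c') / c\<^sup>2)))
      = mu - mu * hit_cdf mu sg x t" .
  show ?thesis using d unfolding eqD .
qed

definition Hx :: "real \<Rightarrow> real \<Rightarrow> real \<Rightarrow> real \<Rightarrow> real" where
  "Hx mu sg x t = 1 - Phi ((- x - mu * t) / (sg * sqrt t))
     + exp (- 2 * mu * x / sg\<^sup>2) * Phi ((- x + mu * t) / (sg * sqrt t)) * (1 + 2 * mu / sg\<^sup>2 * (mu * t - x))
     + 2 * mu * t * std_normal_density ((- x - mu * t) / (sg * sqrt t)) / (sg * sqrt t)"

definition Hxx :: "real \<Rightarrow> real \<Rightarrow> real \<Rightarrow> real \<Rightarrow> real" where
  "Hxx mu sg x t = - (2 * mu / sg\<^sup>2) * exp (- 2 * mu * x / sg\<^sup>2) * Phi ((- x + mu * t) / (sg * sqrt t))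
        * (2 + 2 * mu / sg\<^sup>2 * (mu * t - x))
     - 2 * (2 * mu / sg\<^sup>2) * mu * t * std_normal_density ((- x - mu * t) / (sg * sqrt t)) / (sg * sqrt t)"

lemma Hc_dx:
  assumes "t > 0" "sg > 0"
  shows "((\<lambda>y. Hc mu sg y t) has_real_derivative Hx mu sg x t) (at x)"
proof -
  have st: "sqrt t * sqrt t = t" "sqrt t > 0" using assms by auto
  define c where "c = sg * sqrt t"
  define k where "k = 2 * mu / sg\<^sup>2"
  have cpos: "c > 0" using assms st by (simp add: c_def)
  define zf where "zf = (\<lambda>y. (- y - mu * t) / c)"
  define wf where "wf = (\<lambda>y. (- y + mu * t) / c)"
  define Ef where "Ef = (\<lambda>y. exp (- k * y))"
  have dz: "(zf has_real_derivative - 1 / c) (at x)" unfolding zf_def using cpos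
    by (auto intro!: derivative_eq_intros simp: field_simps)
  have dw: "(wf has_real_derivative - 1 / c) (at x)" unfolding wf_def using cpos
    by (auto intro!: derivative_eq_intros simp: field_simps)
  have dE: "(Ef has_real_derivative - k * Ef x) (at x)" unfolding Ef_def
    by (auto intro!: derivative_eq_intros simp: field_simps)
  have Ek: "exp (- 2 * mu * y / sg\<^sup>2) = Ef y" for y unfolding Ef_def k_def by (simp add: field_simps)
  have hc: "(\<lambda>y. Hc mu sg y t) = (\<lambda>y. y + mu * t - (y + mu * t) * Phi (zf y) - Ef y * (mu * t - y) * Phi (wf y))"
    unfolding Hc_def zf_def wf_def Ek c_def by (simp add: mult.assoc)
  have Ew: "Ef x * std_normal_density (wf x) = std_normal_density (zf x)"
    using phi_identity[OF assms, of mu x] unfolding Ek zf_def wf_def c_def .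
  have hx: "Hx mu sg x t = 1 - Phi (zf x) + Ef x * Phi (wf x) * (1 + k * (mu * t - x)) + 2 * mu * t * std_normal_density (zf x) / c"
    unfolding Hx_def Ek zf_def wf_def c_def k_def by simp
  show ?thesis unfolding hc hx
    apply (rule derivative_eq_intros dz dw dE refl)+
    using cpos Ew[symmetric] by (simp add: divide_simps) (simp add: algebra_simps)
qed

lemma Hx_dx:
  assumes "t > 0" "sg > 0"
  shows "((\<lambda>y. Hx mu sg y t) has_real_derivative Hxx mu sg x t) (at x)"
proof -
  have st: "sqrt t * sqrt t = t" "sqrt t > 0" using assms by auto
  define c where "c = sg * sqrt t"
  define k where "k = 2 * mu / sg\<^sup>2"
  have cpos: "c > 0" using assms st by (simp add: c_def)
  define zf where "zf = (\<lambda>y. (- y - mu * t) / c)"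
  define wf where "wf = (\<lambda>y. (- y + mu * t) / c)"
  define Ef where "Ef = (\<lambda>y. exp (- k * y))"
  have dz: "(zf has_real_derivative - 1 / c) (at x)" unfolding zf_def using cpos
    by (auto intro!: derivative_eq_intros simp: field_simps)
  have dw: "(wf has_real_derivative - 1 / c) (at x)" unfolding wf_def using cpos
    by (auto intro!: derivative_eq_intros simp: field_simps)
  have dE: "(Ef has_real_derivative - k * Ef x) (at x)" unfolding Ef_def
    by (auto intro!: derivative_eq_intros simp: field_simps)
  have Ek: "exp (- 2 * mu * y / sg\<^sup>2) = Ef y" for y unfolding Ef_def k_def by (simp add: field_simps)
  have hx: "(\<lambda>y. Hx mu sg y t) = (\<lambda>y. 1 - Phi (zf y) + Ef y * Phi (wf y) * (1 + k * (mu * t - y)) + 2 * mu * t * std_normal_density (zf y) / c)"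
    unfolding Hx_def Ek zf_def wf_def c_def k_def by simp
  have Ew: "Ef x * std_normal_density (wf x) = std_normal_density (zf x)"
    using phi_identity[OF assms, of mu x] unfolding Ek zf_def wf_def c_def .
  have zc: "2 * mu * t * zf x / c = - k * (x + mu * t)"
    unfolding zf_def c_def k_def using assms st by (simp add: field_simps power2_eq_square)
  have hxx: "Hxx mu sg x t = - k * Ef x * Phi (wf x) * (2 + k * (mu * t - x)) - 2 * k * mu * t * std_normal_density (zf x) / c"
    unfolding Hxx_def Ek zf_def wf_def c_def k_def by simp
  have zx: "zf x * c = - x - mu * t" unfolding zf_def using cpos by simp
  have kc: "k * c * c = 2 * mu * t" unfolding k_def c_def using assms st by (simp add: field_simps power2_eq_square)
  have r: "zf x * (2 * mu * t) = k * c * (- x - mu * t)"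
  proof -
    have "zf x * (2 * mu * t) = zf x * (k * c * c)" by (simp add: kc)
    also have "\<dots> = k * c * (zf x * c)" by simp
    finally show ?thesis by (simp add: zx)
  qed
  show ?thesis unfolding hx hxx
    apply (rule derivative_eq_intros std_normal_deriv_chain dz dw dE refl)+
    using cpos apply simp
    apply (rule refl)
    using cpos Ew[symmetric] apply (simp add: divide_simps)
    using r by algebra
qed

lemma Hc_pde:
  assumes "t > 0" "sg > 0"
  shows "mu - mu * hit_cdf mu sg x t = sg\<^sup>2 / 2 * Hxx mu sg x t + mu * Hx mu sg x t"
  unfolding hit_cdf_def Hxx_def Hx_def using assms
  by (simp add: field_simps power2_eq_square)

lemma Hc_zero:
  assumes "t > 0" "sg > 0"
  shows "Hc mu sg 0 t = 0"
proof -
  define A where "A = mu * t / (sg * sqrt t)"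
  have s: "Phi (- A) + Phi A = 1" by (rule Phi_sym)
  have a: "(- 0 - mu * t) / (sg * sqrt t) = - A" "(- 0 + mu * t) / (sg * sqrt t) = A"
    unfolding A_def by simp_all
  have "Hc mu sg 0 t = mu * t - mu * t * Phi (- A) - mu * t * Phi A"
    unfolding Hc_def a by simp
  also have "\<dots> = mu * t * (1 - (Phi (- A) + Phi A))" by (simp add: algebra_simps)
  finally show ?thesis unfolding s by simp
qed

lemma tendsto_at_bot_aux:
  assumes "x > 0" "sg > 0"
  shows "filterlim (\<lambda>s. (- x + a * s) / (sg * sqrt s)) at_bot (at_right 0)"
proof -
  have "filterlim (\<lambda>s. (- x + a * s) * inverse (sg * sqrt s)) at_bot (at_right 0)"
  proof (rule filterlim_tendsto_neg_mult_at_bot)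
    show "((\<lambda>s. - x + a * s) \<longlongrightarrow> - x + a * 0) (at_right 0)"
      by (intro tendsto_intros)
    show "- x + a * 0 < 0" using assms by simp
    show "filterlim (\<lambda>s. inverse (sg * sqrt s)) at_top (at_right 0)"
    proof (rule filterlim_inverse_at_top)
      show "((\<lambda>s. sg * sqrt s) \<longlongrightarrow> 0) (at_right 0)"
        using tendsto_mult[OF tendsto_const[of sg] tendsto_real_sqrt[OF tendsto_ident_at[of 0 "{0<..}"]]] by simp
      show "\<forall>\<^sub>F s in at_right 0. 0 < sg * sqrt s"
        using eventually_at_right_less[of "0::real"] by eventually_elim (use assms in auto)
    qed
  qed
  then show ?thesis by (simp add: divide_inverse)
qed

lemma Hc_lim:
  assumes "x \<ge> 0" "sg > 0"
  shows "((\<lambda>s. Hc mu sg x s) \<longlongrightarrow> x) (at_right 0)"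
proof (cases "x = 0")
  case True
  have "\<forall>\<^sub>F s in at_right 0. Hc mu sg x s = 0"
    using eventually_at_right_less[of "0::real"] by eventually_elim (use assms True Hc_zero in auto)
  then show ?thesis using True by (simp add: tendsto_eventually)
next
  case False
  then have xp: "x > 0" using assms by simp
  have z: "((\<lambda>s. Phi ((- x - mu * s) / (sg * sqrt s))) \<longlongrightarrow> 0) (at_right 0)"
    using filterlim_compose[OF Phi_at_bot tendsto_at_bot_aux[OF xp assms(2), of "- mu"]] by simp
  have w: "((\<lambda>s. Phi ((- x + mu * s) / (sg * sqrt s))) \<longlongrightarrow> 0) (at_right 0)"
    using filterlim_compose[OF Phi_at_bot tendsto_at_bot_aux[OF xp assms(2), of "mu"]] by simp
  have "((\<lambda>s. x + mu * s - (x + mu * s) * Phi ((- x - mu * s) / (sg * sqrt s))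
     - exp (- 2 * mu * x / sg\<^sup>2) * (mu * s - x) * Phi ((- x + mu * s) / (sg * sqrt s)))
     \<longlongrightarrow> x + mu * 0 - (x + mu * 0) * 0 - exp (- 2 * mu * x / sg\<^sup>2) * (mu * 0 - x) * 0) (at_right 0)"
    by (intro tendsto_intros z w)
  then show ?thesis unfolding Hc_def by simp
qed

lemma hit_cdf_nonneg: "x \<ge> 0 \<Longrightarrow> 0 \<le> hit_cdf mu sg x t"
  unfolding hit_cdf_def by (intro add_nonneg_nonneg mult_nonneg_nonneg Phi_nonneg) auto

lemma h_eq_Hc:
  assumes "x \<ge> 0" "t > 0" "sg > 0" "mu > 0"
  shows "h mu sg x t = Hc mu sg x t" and "(\<lambda>s. hit_cdf mu sg x s) integrable_on {0..t}"
proof -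
  define G where "G s = (if s = 0 then x else Hc mu sg x s)" for s
  have dG: "(G has_real_derivative (mu - mu * hit_cdf mu sg x s)) (at s)" if "s > 0" for s
    by (rule has_field_derivative_transform_within_open[OF Hc_dt[OF that assms(3)], where S="{0<..}"])
       (use that in \<open>auto simp: G_def\<close>)
  have cont: "continuous_on {0..t} G"
  proof (clarsimp simp: continuous_on_eq_continuous_within)
    fix s assume s: "0 \<le> s" "s \<le> t"
    show "continuous (at s within {0..t}) G"
    proof (cases "s = 0")
      case True
      have "(G \<longlongrightarrow> G 0) (at_right 0)"
      proof -
        have "\<forall>\<^sub>F s in at_right 0. Hc mu sg x s = G s"
          using eventually_at_right_less[of "0::real"] by eventually_elim (auto simp: G_def)
        then have "(G \<longlongrightarrow> x) (at_right 0)" using tendsto_cong Hc_lim[OF assms(1,3), of mu] by blast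
        then show ?thesis by (simp add: G_def)
      qed
      then show ?thesis using True assms(2)
        by (simp add: continuous_within at_within_Icc_at_right)
    next
      case False
      then show ?thesis using s dG[of s] DERIV_isCont continuous_at_imp_continuous_at_within by fastforce
    qed
  qed
  have I: "((\<lambda>s. mu - mu * hit_cdf mu sg x s) has_integral (G t - G 0)) {0..t}"
    by (rule fundamental_theorem_of_calculus_interior[OF _ cont])
       (use assms(2) dG in \<open>auto simp: has_real_derivative_iff_has_vector_derivative[symmetric]\<close>)
  have Gt: "G t - G 0 = Hc mu sg x t - x" using assms by (simp add: G_def)
  have I2: "((\<lambda>s. mu * hit_cdf mu sg x s) has_integral (mu * t - (Hc mu sg x t - x))) {0..t}"
    using has_integral_diff[OF has_integral_const_real[of mu 0 t] I] assms(2) unfolding Gt by (simp add: mult.commute)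
  have I3: "((\<lambda>s. hit_cdf mu sg x s) has_integral (mu * t - (Hc mu sg x t - x)) / mu) {0..t}"
    using has_integral_cmul[OF I2, of "1 / mu"] assms by simp
  then show "(\<lambda>s. hit_cdf mu sg x s) integrable_on {0..t}" by blast
  have "integral {0..t} (\<lambda>s. hit_cdf mu sg x s) = (mu * t - (Hc mu sg x t - x)) / mu"
    using I3 by (rule integral_unique)
  then show "h mu sg x t = Hc mu sg x t" unfolding h_def using assms by simp
qed

lemma h_le:
  assumes "x \<ge> 0" "t > 0" "sg > 0" "mu > 0"
  shows "h mu sg x t \<le> x + mu * t"
proof -
  have "0 \<le> integral {0..t} (\<lambda>s. hit_cdf mu sg x s)"
    by (rule integral_nonneg[OF h_eq_Hc(2)[OF assms]]) (use assms hit_cdf_nonneg in auto)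
  then show ?thesis unfolding h_def using assms by simp
qed

lemma hit_cdf_convex:
  assumes "mu > 0" "sg > 0" "s \<ge> 0"
  shows "convex_on {0<..} (\<lambda>x. hit_cdf mu sg x s)"
proof -
  define ci where "ci = 1 / (sg * sqrt s)"
  define m where "m = mu * s"
  define k where "k = 2 * mu / sg\<^sup>2"
  have ci0: "ci \<ge> 0" using assms by (simp add: ci_def)
  define af where "af = (\<lambda>y. (- y - m) * ci)"
  define bf where "bf = (\<lambda>y. (- y + m) * ci)"
  define Ef where "Ef = (\<lambda>y. exp (- k * y))"
  have Ek: "exp (- 2 * mu * y / sg\<^sup>2) = Ef y" for y unfolding Ef_def k_def by (simp add: field_simps)
  have p: "(\<lambda>x. hit_cdf mu sg x s) = (\<lambda>y. Phi (af y) + Ef y * Phi (bf y))"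
    unfolding hit_cdf_def Ek af_def bf_def ci_def m_def by (simp add: divide_inverse)
  define f' where "f' = (\<lambda>y. std_normal_density (af y) * (- ci) + (- k * Ef y * Phi (bf y) + Ef y * (std_normal_density (bf y) * (- ci))))"
  define f'' where "f'' = (\<lambda>y. - af y * ci\<^sup>2 * std_normal_density (af y) + k\<^sup>2 * Ef y * Phi (bf y)
      + 2 * k * ci * Ef y * std_normal_density (bf y) - bf y * ci\<^sup>2 * Ef y * std_normal_density (bf y))"
  have daf: "(af has_real_derivative - ci) (at y)" for y unfolding af_def
    by (auto intro!: derivative_eq_intros)
  have dbf: "(bf has_real_derivative - ci) (at y)" for y unfolding bf_def
    by (auto intro!: derivative_eq_intros)
  have dE: "(Ef has_real_derivative - k * Ef y) (at y)" for y unfolding Ef_def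
    by (auto intro!: derivative_eq_intros simp: field_simps)
  have d1: "((\<lambda>y. Phi (af y) + Ef y * Phi (bf y)) has_real_derivative f' y) (at y)" for y
    unfolding f'_def
    by (rule derivative_eq_intros daf dbf dE refl)+ (simp add: algebra_simps)
  have d2: "(f' has_real_derivative f'' y) (at y)" for y
    unfolding f'_def f''_def
    by (rule derivative_eq_intros std_normal_deriv_chain daf dbf dE refl)+ (simp add: algebra_simps power2_eq_square)
  have nn: "f'' y \<ge> 0" if "y \<in> {0<..}" for y
  proof -
    have y: "y > 0" using that by simp
    have t1: "- af y * ci\<^sup>2 * std_normal_density (af y) \<ge> 0"
    proof -
      have "mu * s \<ge> 0" using assms by simp
      then have "- y - mu * s \<le> 0" using y by simp
      then have "- af y \<ge> 0" unfolding af_def m_def using ci0 by (simp add: mult_nonpos_nonneg)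
      then show ?thesis by (intro mult_nonneg_nonneg) auto
    qed
    have t2: "k\<^sup>2 * Ef y * Phi (bf y) \<ge> 0" by (simp add: Ef_def Phi_nonneg)
    have bci: "bf y * ci \<le> 2 * k"
    proof (cases "s = 0")
      case True then show ?thesis using assms by (simp add: bf_def ci_def k_def)
    next
      case False
      then have sp: "s > 0" using assms by simp
      have "bf y * ci = (m - y) * ci\<^sup>2" unfolding bf_def by (simp add: power2_eq_square algebra_simps)
      also have "\<dots> \<le> m * ci\<^sup>2" using y by (simp add: mult_right_mono algebra_simps)
      also have "m * ci\<^sup>2 = mu / sg\<^sup>2" using sp assms unfolding m_def ci_def
        by (simp add: power2_eq_square field_simps)
      also have "\<dots> \<le> 2 * k" unfolding k_def using assms by (simp add: field_simps)
      finally show ?thesis .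
    qed
    have t3: "2 * k * ci * Ef y * std_normal_density (bf y) - bf y * ci\<^sup>2 * Ef y * std_normal_density (bf y)
        = ci * Ef y * std_normal_density (bf y) * (2 * k - bf y * ci)"
      by (simp add: algebra_simps power2_eq_square)
    have t4: "ci * Ef y * std_normal_density (bf y) * (2 * k - bf y * ci) \<ge> 0"
      using ci0 bci by (simp add: Ef_def)
    show ?thesis unfolding f''_def using t1 t2 t3 t4 by linarith
  qed
  show ?thesis unfolding p
    by (rule f''_ge0_imp_convex[OF convex_real_interval(3)[of 0]] d1 d2 nn)+
qed

lemma h_concave:
  assumes "mu > 0" "sg > 0" "t > 0"
  shows "concave_on {0<..} (\<lambda>x. h mu sg x t)"
  unfolding concave_on_iff
proof (intro conjI ballI allI impI)
  show "convex {0::real<..}" by simp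
  fix x y u v :: real
  assume x: "x \<in> {0<..}" and y: "y \<in> {0<..}" and u: "u \<ge> 0" and v: "v \<ge> 0" and uv: "u + v = 1"
  have xy: "u * x + v * y > 0"
  proof (cases "u = 0")
    case True then show ?thesis using uv y by simp
  next
    case False then have "u * x > 0" using u x by simp
    moreover have "v * y \<ge> 0" using v y by simp
    ultimately show ?thesis by simp
  qed
  have ix: "(\<lambda>s. hit_cdf mu sg x s) integrable_on {0..t}" using h_eq_Hc(2)[of x t sg mu] x assms by simp
  have iy: "(\<lambda>s. hit_cdf mu sg y s) integrable_on {0..t}" using h_eq_Hc(2)[of y t sg mu] y assms by simp
  have ixy: "(\<lambda>s. hit_cdf mu sg (u * x + v * y) s) integrable_on {0..t}" using h_eq_Hc(2)[of "u * x + v * y" t sg mu] xy assms by simp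
  have "integral {0..t} (\<lambda>s. hit_cdf mu sg (u * x + v * y) s)
      \<le> integral {0..t} (\<lambda>s. u * hit_cdf mu sg x s + v * hit_cdf mu sg y s)"
  proof (rule integral_le[OF ixy])
    show "(\<lambda>s. u * hit_cdf mu sg x s + v * hit_cdf mu sg y s) integrable_on {0..t}"
      using integrable_add[OF integrable_on_cmult_left[OF ix, of u] integrable_on_cmult_left[OF iy, of v]] by simp
    fix s assume s: "s \<in> {0..t}"
    show "hit_cdf mu sg (u * x + v * y) s \<le> u * hit_cdf mu sg x s + v * hit_cdf mu sg y s"
      using convex_onD[OF hit_cdf_convex[OF assms(1,2), of s], of v x y] s x y u v uv
      by (simp add: eq_diff_eq[symmetric])
  qed
  also have "\<dots> = u * integral {0..t} (\<lambda>s. hit_cdf mu sg x s) + v * integral {0..t} (\<lambda>s. hit_cdf mu sg y s)"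
  proof -
    have "integral {0..t} (\<lambda>s. u * hit_cdf mu sg x s + v * hit_cdf mu sg y s)
       = integral {0..t} (\<lambda>s. u * hit_cdf mu sg x s) + integral {0..t} (\<lambda>s. v * hit_cdf mu sg y s)"
      using integral_add[OF integrable_on_cmult_left[OF ix, of u] integrable_on_cmult_left[OF iy, of v]] by simp
    also have "\<dots> = u * integral {0..t} (\<lambda>s. hit_cdf mu sg x s) + v * integral {0..t} (\<lambda>s. hit_cdf mu sg y s)"
      by (simp only: integral_mult[OF ix, of u] integral_mult[OF iy, of v])
    finally show ?thesis .
  qed
  finally have I: "integral {0..t} (\<lambda>s. hit_cdf mu sg (u * x + v * y) s)
      \<le> u * integral {0..t} (\<lambda>s. hit_cdf mu sg x s) + v * integral {0..t} (\<lambda>s. hit_cdf mu sg y s)" .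
  have "u * h mu sg x t + v * h mu sg y t = (u * x + v * y) + (u + v) * (mu * t)
      - mu * (u * integral {0..t} (\<lambda>s. hit_cdf mu sg x s) + v * integral {0..t} (\<lambda>s. hit_cdf mu sg y s))"
    unfolding h_def by (simp add: algebra_simps)
  also have "\<dots> \<le> (u * x + v * y) + mu * t - mu * integral {0..t} (\<lambda>s. hit_cdf mu sg (u * x + v * y) s)"
  proof -
    have "mu * integral {0..t} (\<lambda>s. hit_cdf mu sg (u * x + v * y) s)
      \<le> mu * (u * integral {0..t} (\<lambda>s. hit_cdf mu sg x s) + v * integral {0..t} (\<lambda>s. hit_cdf mu sg y s))"
      by (rule mult_left_mono[OF I]) (use assms in simp)
    then show ?thesis using uv by simp
  qed
  finally show "u * h mu sg x t + v * h mu sg y t \<le> h mu sg (u *\<^sub>R x + v *\<^sub>R y) t"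
    unfolding h_def by simp
qed

lemma part2:
  assumes "mu > 0" "sg > 0" "rho > 0" "t > 0" "x \<ge> U" "x \<ge> 0" "x - U + mu / rho \<ge> mu / rho"
  shows "mu / rho - U + h mu sg x t \<le> exp (rho * t) * (x - U + mu / rho)"
proof -
  define L where "L = x - U + mu / rho"
  have L: "L \<ge> mu / rho" using assms by (simp add: L_def)
  have "mu / rho - U + h mu sg x t \<le> L + mu * t" using h_le[OF assms(6,4,2,1)] by (simp add: L_def)
  also have "mu * t \<le> rho * t * L"
  proof -
    have "mu * t = rho * t * (mu / rho)" using assms by simp
    also have "\<dots> \<le> rho * t * L" using L assms by (intro mult_left_mono) auto
    finally show ?thesis .
  qed
  then have "L + mu * t \<le> (1 + rho * t) * L" by (simp add: algebra_simps)
  also have "\<dots> \<le> exp (rho * t) * L"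
  proof (rule mult_right_mono)
    show "1 + rho * t \<le> exp (rho * t)" by (rule exp_ge_add_one_self)
    have "0 \<le> mu / rho" using assms by simp
    then show "0 \<le> L" using L by linarith
  qed
  finally show ?thesis by (simp add: L_def)
qed

lemma maxprin:
  fixes w wx wxx wt :: "real \<Rightarrow> real \<Rightarrow> real" and R tz T a b m :: real
  assumes R: "R > 0" and T: "tz < T" and a: "a > 0"
  and cont: "continuous_on ({0..R} \<times> {tz..T}) (\<lambda>p. w (fst p) (snd p))"
  and left: "\<And>t. t \<in> {tz..T} \<Longrightarrow> w 0 t \<ge> m"
  and right: "\<And>t. t \<in> {tz..T} \<Longrightarrow> w R t \<ge> m"
  and bottom: "\<And>x. x \<in> {0..R} \<Longrightarrow> w x tz \<ge> m"
  and dx: "\<And>x t. x \<in> {0<..<R} \<Longrightarrow> t \<in> {tz<..T} \<Longrightarrow> ((\<lambda>y. w y t) has_real_derivative wx x t) (at x)"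
  and dxx: "\<And>x t. x \<in> {0<..<R} \<Longrightarrow> t \<in> {tz<..T} \<Longrightarrow> ((\<lambda>y. wx y t) has_real_derivative wxx x t) (at x)"
  and dt: "\<And>x t. x \<in> {0<..<R} \<Longrightarrow> t \<in> {tz<..T} \<Longrightarrow> ((\<lambda>s. w x s) has_real_derivative wt x t) (at t)"
  and pde: "\<And>x t. x \<in> {0<..<R} \<Longrightarrow> t \<in> {tz<..T} \<Longrightarrow> wt x t = a * wxx x t + b * wx x t"
  and x0: "x0 \<in> {0..R}" and s0: "s0 \<in> {tz..T}"
  shows "w x0 s0 \<ge> m"
proof (rule ccontr)
  assume neg: "\<not> m \<le> w x0 s0"
  define eps where "eps = (m - w x0 s0) / (2 * (T - tz))"
  have eps: "eps > 0" using neg T by (simp add: eps_def)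
  define v where "v p = w (fst p) (snd p) + eps * (snd p - tz)" for p :: "real \<times> real"
  define K where "K = {0..R} \<times> {tz..T}"
  have cv: "continuous_on K v" unfolding v_def K_def
    by (intro continuous_intros cont)
  have "compact K" unfolding K_def by (intro compact_Times compact_Icc)
  moreover have "K \<noteq> {}" using R T unfolding K_def by auto
  ultimately obtain p where pK: "p \<in> K" and pmin: "\<And>q. q \<in> K \<Longrightarrow> v p \<le> v q"
    using continuous_attains_inf[OF _ _ cv] by blast
  obtain xs ts where p: "p = (xs, ts)" by (cases p)
  have v0: "v (x0, s0) = w x0 s0 + eps * (s0 - tz)" by (simp add: v_def)
  have "eps * (s0 - tz) \<le> eps * (T - tz)" using eps s0 by (intro mult_left_mono) auto
  also have "eps * (T - tz) = (m - w x0 s0) / 2" using T by (simp add: eps_def field_simps)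
  finally have "v (x0, s0) < m" using neg v0 by (simp add: field_simps)
  moreover have "(x0, s0) \<in> K" using x0 s0 by (simp add: K_def)
  ultimately have vp: "v (xs, ts) < m" using pmin p by fastforce
  have xs: "xs \<in> {0..R}" and ts: "ts \<in> {tz..T}" using pK p by (auto simp: K_def)
  have vge: "v (x, t) \<ge> w x t" if "t \<ge> tz" for x t using eps that by (simp add: v_def)
  have "xs \<noteq> 0" using vge[of ts 0] left[OF ts] vp ts by auto
  moreover have "xs \<noteq> R" using vge[of ts R] right[OF ts] vp ts by auto
  ultimately have xs': "xs \<in> {0<..<R}" using xs by auto
  have "ts \<noteq> tz" using bottom[OF xs] vp by (auto simp: v_def)
  then have ts': "ts \<in> {tz<..T}" using ts by auto
  have minK: "w xs ts \<le> w y s + eps * (s - ts)" if "y \<in> {0..R}" "s \<in> {tz..T}" for y s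
    using pmin[of "(y, s)"] that p by (auto simp: K_def v_def algebra_simps)
  have wx0: "wx xs ts = 0"
  proof (rule DERIV_local_min[OF dx[OF xs' ts']])
    show "0 < min xs (R - xs)" using xs' by simp
    show "\<forall>y. \<bar>xs - y\<bar> < min xs (R - xs) \<longrightarrow> w xs ts \<le> w y ts"
      using minK[of _ ts] ts by (auto simp: abs_if split: if_splits)
  qed
  have wxx0: "wxx xs ts \<ge> 0"
  proof (rule ccontr)
    assume "\<not> 0 \<le> wxx xs ts"
    then obtain d where d: "d > 0" and dd: "\<And>h. h > 0 \<Longrightarrow> h < d \<Longrightarrow> wx (xs + h) ts < wx xs ts"
      using DERIV_neg_dec_right[OF dxx[OF xs' ts']] by force
    define hh where "hh = min d (R - xs) / 2"
    have hh: "hh > 0" "hh < d" "xs + hh < R" using d xs' by (auto simp: hh_def min_def field_simps)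
    obtain z where z: "xs < z" "z < xs + hh" "w (xs + hh) ts - w xs ts = (xs + hh - xs) * wx z ts"
      using MVT2[of xs "xs + hh" "\<lambda>y. w y ts" "\<lambda>y. wx y ts"] hh xs' ts' dx by force
    have "wx z ts < 0" using dd[of "z - xs"] z hh wx0 by simp
    then have "hh * wx z ts < 0" using hh(1) by (simp add: mult_pos_neg)
    then have "w (xs + hh) ts < w xs ts" using z(3) by simp
    moreover have "w xs ts \<le> w (xs + hh) ts" using minK[of "xs + hh" ts] hh xs' ts by simp
    ultimately show False by simp
  qed
  have wt0: "wt xs ts + eps \<le> 0"
  proof (rule ccontr)
    assume "\<not> wt xs ts + eps \<le> 0"
    then have pos: "wt xs ts + eps > 0" by simp
    have dg: "((\<lambda>s. w xs s + eps * (s - tz)) has_real_derivative wt xs ts + eps) (at ts)"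
      by (rule derivative_eq_intros dt[OF xs' ts'] refl)+ simp
    obtain d where d: "d > 0" and dd: "\<And>h. h > 0 \<Longrightarrow> h < d \<Longrightarrow> w xs (ts - h) + eps * (ts - h - tz) < w xs ts + eps * (ts - tz)"
      using DERIV_pos_inc_left[OF dg pos] by force
    define hh where "hh = min d (ts - tz) / 2"
    have hh: "hh > 0" "hh < d" "ts - hh > tz" using d ts' by (auto simp: hh_def min_def field_simps)
    have "w xs ts \<le> w xs (ts - hh) + eps * (ts - hh - ts)" using minK[of xs "ts - hh"] xs hh ts by simp
    then show False using dd[OF hh(1,2)] by (simp add: algebra_simps)
  qed
  have "wt xs ts = a * wxx xs ts" using pde[OF xs' ts'] wx0 by simp
  then have "wt xs ts \<ge> 0" using a wxx0 by simp
  then show False using wt0 eps by simp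
qed

lemma ode_unique:
  fixes D D' D'' :: "real \<Rightarrow> real"
  assumes sg: "sg > 0" and rho: "rho > 0" and mu: "mu > 0"
  and d1: "\<And>x. (D has_real_derivative D' x) (at x)"
  and d2: "\<And>x. (D' has_real_derivative D'' x) (at x)"
  and ode: "\<And>x. sg\<^sup>2 / 2 * D'' x + mu * D' x - rho * D x = 0"
  and i0: "D U = 0" and i1: "D' U = 0"
  shows "D y = 0"
proof -
  define a where "a = 2 / sg\<^sup>2"
  have a: "a > 0" using sg by (simp add: a_def)
  have D'': "D'' x = a * (rho * D x - mu * D' x)" for x
    using ode[of x] sg unfolding a_def by (simp add: field_simps)
  define C where "C = 1 + a * rho + 2 * a * mu"
  define E where "E x = (D x)\<^sup>2 + (D' x)\<^sup>2" for x
  define E' where "E' x = 2 * D x * D' x + 2 * D' x * D'' x" for x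
  have dE: "(E has_real_derivative E' x) (at x)" for x
    unfolding E_def E'_def by (rule derivative_eq_intros d1 d2 refl)+ (simp add: algebra_simps)
  have E0: "E x \<ge> 0" for x unfolding E_def by simp
  have bnd: "\<bar>E' x\<bar> \<le> C * E x" for x
  proof -
    have s: "2 * \<bar>D x * D' x\<bar> \<le> E x"
      unfolding E_def using sum_squares_bound[of "\<bar>D x\<bar>" "\<bar>D' x\<bar>"]
      by (simp add: abs_mult power2_eq_square)
    have e: "E' x = (2 + 2 * a * rho) * (D x * D' x) - 2 * a * mu * (D' x)\<^sup>2"
      unfolding E'_def D'' by (simp add: algebra_simps power2_eq_square)
    have "\<bar>E' x\<bar> \<le> (2 + 2 * a * rho) * \<bar>D x * D' x\<bar> + 2 * a * mu * (D' x)\<^sup>2"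
    proof -
      have "\<bar>E' x\<bar> \<le> \<bar>(2 + 2 * a * rho) * (D x * D' x)\<bar> + \<bar>2 * a * mu * (D' x)\<^sup>2\<bar>"
        unfolding e by (rule abs_triangle_ineq4)
      also have "\<bar>(2 + 2 * a * rho) * (D x * D' x)\<bar> = (2 + 2 * a * rho) * \<bar>D x * D' x\<bar>"
        using a rho by (simp add: abs_mult)
      also have "\<bar>2 * a * mu * (D' x)\<^sup>2\<bar> = 2 * a * mu * (D' x)\<^sup>2"
        using a mu by (simp add: abs_mult)
      finally show ?thesis .
    qed
    also have "\<dots> \<le> (1 + a * rho) * E x + 2 * a * mu * E x"
    proof -
      have "(2 + 2 * a * rho) * \<bar>D x * D' x\<bar> = (1 + a * rho) * (2 * \<bar>D x * D' x\<bar>)" by simp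
      also have "\<dots> \<le> (1 + a * rho) * E x" using s a rho by (intro mult_left_mono) auto
      finally have 1: "(2 + 2 * a * rho) * \<bar>D x * D' x\<bar> \<le> (1 + a * rho) * E x" .
      have "(D' x)\<^sup>2 \<le> E x" unfolding E_def by simp
      then have 2: "2 * a * mu * (D' x)\<^sup>2 \<le> 2 * a * mu * E x" using a mu by (intro mult_left_mono) auto
      show ?thesis using 1 2 by simp
    qed
    also have "\<dots> = C * E x" unfolding C_def by (simp add: algebra_simps)
    finally show ?thesis .
  qed
  have EU: "E U = 0" unfolding E_def using i0 i1 by simp
  have "E y = 0"
  proof (cases "y \<ge> U")
    case True
    define F where "F x = E x * exp (- C * x)" for x
    have "F y \<le> F U"
    proof (rule DERIV_nonpos_imp_nonincreasing[OF True])
      fix x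
      have "(F has_real_derivative E' x * exp (- C * x) + E x * (exp (- C * x) * (- C))) (at x)"
        unfolding F_def by (rule derivative_eq_intros dE refl)+ simp
      moreover have "E' x * exp (- C * x) + E x * (exp (- C * x) * (- C)) \<le> 0"
      proof -
        have "E' x - C * E x \<le> 0" using bnd[of x] by simp
        then have "(E' x - C * E x) * exp (- C * x) \<le> 0" by (simp add: mult_nonpos_nonneg)
        then show ?thesis by (simp add: algebra_simps)
      qed
      ultimately show "\<exists>y. (F has_real_derivative y) (at x) \<and> y \<le> 0" by blast
    qed
    then have "E y * exp (- C * y) \<le> 0" using EU by (simp add: F_def)
    then have "E y \<le> 0" by (simp add: mult_le_0_iff)
    then show ?thesis using E0[of y] by simp
  next
    case False
    then have yU: "y \<le> U" by simp
    define F where "F x = E x * exp (C * x)" for x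
    have "F y \<le> F U"
    proof (rule DERIV_nonneg_imp_nondecreasing[OF yU])
      fix x
      have "(F has_real_derivative E' x * exp (C * x) + E x * (exp (C * x) * C)) (at x)"
        unfolding F_def by (rule derivative_eq_intros dE refl)+ simp
      moreover have "E' x * exp (C * x) + E x * (exp (C * x) * C) \<ge> 0"
      proof -
        have "E' x + C * E x \<ge> 0" using bnd[of x] by simp
        then have "(E' x + C * E x) * exp (C * x) \<ge> 0" by simp
        then show ?thesis by (simp add: algebra_simps)
      qed
      ultimately show "\<exists>y. (F has_real_derivative y) (at x) \<and> y \<ge> 0" by blast
    qed
    then have "E y * exp (C * y) \<le> 0" using EU by (simp add: F_def)
    then have "E y \<le> 0" by (simp add: mult_le_0_iff)
    then show ?thesis using E0[of y] by simp
  qed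
  then show ?thesis unfolding E_def by (simp add: add_nonneg_eq_0_iff)
qed

locale vparams =
  fixes mu sg rho :: real
  assumes mu: "mu > 0" and sg: "sg > 0" and rho: "rho > 0"
begin

definition "S = sqrt (mu\<^sup>2 + 2 * sg\<^sup>2 * rho)"
definition "R1 = r1 mu sg rho"
definition "R2 = r2 mu sg rho"
definition "U = u0 mu sg rho"
definition "D = rho * (R1 + R2)"
definition "A = (rho + mu * R2) / D"
definition "B = - (rho - mu * R1) / D"
definition "Vx y = A * exp (R1 * (y - U)) + B * exp (- R2 * (y - U))"
definition "Vx' y = A * R1 * exp (R1 * (y - U)) - B * R2 * exp (- R2 * (y - U))"
definition "Vx'' y = A * R1\<^sup>2 * exp (R1 * (y - U)) + B * R2\<^sup>2 * exp (- R2 * (y - U))"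

lemma S2: "S * S = mu\<^sup>2 + 2 * sg\<^sup>2 * rho"
  unfolding S_def using sg rho by (simp add: add_nonneg_nonneg)

lemma S_gt: "S > mu"
proof -
  have "mu\<^sup>2 < mu\<^sup>2 + 2 * sg\<^sup>2 * rho" using sg rho by simp
  then show ?thesis unfolding S_def by (rule real_less_rsqrt)
qed

lemma R1_pos: "R1 > 0" unfolding R1_def r1_def S_def[symmetric] using S_gt sg by simp
lemma R2_pos: "R2 > 0" unfolding R2_def r2_def S_def[symmetric] using S_gt sg mu by simp

lemma char1: "sg\<^sup>2 / 2 * R1\<^sup>2 + mu * R1 - rho = 0"
  unfolding R1_def r1_def S_def[symmetric] using sg S2
  by (simp add: field_simps power2_eq_square)

lemma char2: "sg\<^sup>2 / 2 * R2\<^sup>2 - mu * R2 - rho = 0"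
  unfolding R2_def r2_def S_def[symmetric] using sg S2
  by (simp add: field_simps power2_eq_square)

lemma rel: "rho * (R1 - R2) + mu * R1 * R2 = 0"
  unfolding R1_def r1_def R2_def r2_def S_def[symmetric] using sg S2
  by (simp add: field_simps power2_eq_square)

lemma rmr1: "rho - mu * R1 > 0"
proof -
  have p: "sg\<^sup>2 / 2 * R1\<^sup>2 > 0" using sg R1_pos by simp
  show ?thesis using p char1 by linarith
qed

lemma dV1: "(Vx has_real_derivative Vx' y) (at y)"
  unfolding Vx_def[abs_def] Vx'_def
  by (rule derivative_eq_intros refl)+ (simp add: algebra_simps)

lemma dV2: "(Vx' has_real_derivative Vx'' y) (at y)"
  unfolding Vx'_def[abs_def] Vx''_def
  by (rule derivative_eq_intros refl)+ (simp add: algebra_simps power2_eq_square)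

lemma V_ode: "sg\<^sup>2 / 2 * Vx'' y + mu * Vx' y - rho * Vx y = 0"
proof -
  have "sg\<^sup>2 / 2 * Vx'' y + mu * Vx' y - rho * Vx y
     = A * exp (R1 * (y - U)) * (sg\<^sup>2 / 2 * R1\<^sup>2 + mu * R1 - rho) + B * exp (- R2 * (y - U)) * (sg\<^sup>2 / 2 * R2\<^sup>2 - mu * R2 - rho)"
    unfolding Vx_def Vx'_def Vx''_def by (simp add: algebra_simps)
  then show ?thesis using char1 char2 by simp
qed

lemma sumpos: "R1 + R2 > 0" using R1_pos R2_pos by simp
lemma Dpos: "D > 0" unfolding D_def using sumpos rho by simp

lemma V_U: "Vx U = mu / rho"
proof -
  have "Vx U = A + B" unfolding Vx_def by simp
  also have "\<dots> = mu / rho" unfolding A_def B_def using Dpos rho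
    by (simp add: field_simps) (simp add: D_def algebra_simps)
  finally show ?thesis .
qed

lemma V'_U: "Vx' U = 1"
proof -
  have "Vx' U = A * R1 - B * R2" unfolding Vx'_def by simp
  also have "\<dots> = 1" unfolding A_def B_def using Dpos rho
    by (simp add: field_simps) (simp add: D_def algebra_simps)
  finally show ?thesis .
qed

lemma V_0: "Vx 0 = 0"
proof -
  define Q where "Q = (rho + mu * R2) / (rho - mu * R1)"
  have "rho + mu * R2 > 0" using R2_pos mu rho by (simp add: add_pos_pos)
  then have Qp: "Q > 0" unfolding Q_def using rmr1 by (simp add: divide_pos_pos)
  have U: "U = ln Q / (R1 + R2)" unfolding U_def u0_def Q_def R1_def R2_def by simp
  have eQ: "exp ((R1 + R2) * U) = Q" unfolding U using sumpos Qp by simp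
  have "R2 * U = (R1 + R2) * U + (- R1 * U)" by (simp add: algebra_simps)
  then have "exp (R2 * U) = exp ((R1 + R2) * U) * exp (- R1 * U)"
    by (simp only: exp_add)
  then have e2: "exp (R2 * U) = Q * exp (- R1 * U)" using eQ by simp
  have "Vx 0 = A * exp (- R1 * U) + B * exp (R2 * U)" unfolding Vx_def by simp
  also have "\<dots> = exp (- R1 * U) * (A + B * Q)" unfolding e2 by (simp add: algebra_simps)
  also have "A + B * Q = 0" unfolding A_def B_def Q_def using rmr1 Dpos by (simp add: field_simps)
  finally show ?thesis by simp
qed

lemma V'_ge1: "Vx' y \<ge> 1"
proof -
  define d where "d = y - U"
  have ar: "A * R1 \<ge> 0" unfolding A_def using R1_pos R2_pos mu rho Dpos by simp
  have "B \<le> 0" using divide_nonpos_pos[of "mu * R1 - rho" D] rmr1 Dpos unfolding B_def by simp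
  then have br: "- B * R2 \<ge> 0" using R2_pos by (simp add: mult_nonpos_nonneg)
  have z: "A * R1\<^sup>2 + B * R2\<^sup>2 = 0"
  proof -
    have "A * R1\<^sup>2 + B * R2\<^sup>2 = ((rho + mu * R2) * R1\<^sup>2 - (rho - mu * R1) * R2\<^sup>2) / D"
      unfolding A_def B_def using Dpos by (simp add: field_simps)
    also have "(rho + mu * R2) * R1\<^sup>2 - (rho - mu * R1) * R2\<^sup>2 = (R1 + R2) * (rho * (R1 - R2) + mu * R1 * R2)"
      by (simp add: algebra_simps power2_eq_square)
    finally show ?thesis using rel by simp
  qed
  have "Vx' y - 1 = A * R1 * (exp (R1 * d) - 1) + (- B * R2) * (exp (- R2 * d) - 1)"
    using V'_U unfolding Vx'_def d_def by (simp add: algebra_simps)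
  also have "\<dots> \<ge> A * R1 * (R1 * d) + (- B * R2) * (- R2 * d)"
  proof -
    have "A * R1 * (R1 * d) \<le> A * R1 * (exp (R1 * d) - 1)"
    proof -
      have e: "R1 * d \<le> exp (R1 * d) - 1" using exp_ge_add_one_self[of "R1 * d"] by linarith
      show ?thesis by (rule mult_left_mono[OF e ar])
    qed
    moreover have "(- B * R2) * (- R2 * d) \<le> (- B * R2) * (exp (- R2 * d) - 1)"
    proof -
      have e: "- R2 * d \<le> exp (- R2 * d) - 1" using exp_ge_add_one_self[of "- R2 * d"] by linarith
      show ?thesis by (rule mult_left_mono[OF e br])
    qed
    ultimately show ?thesis by simp
  qed
  also have "A * R1 * (R1 * d) + (- B * R2) * (- R2 * d) = d * (A * R1\<^sup>2 + B * R2\<^sup>2)"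
    by (simp add: algebra_simps power2_eq_square)
  finally show ?thesis using z by simp
qed

lemma V_ge_id: "y \<ge> 0 \<Longrightarrow> Vx y \<ge> y"
proof -
  assume y: "y \<ge> 0"
  have "(\<lambda>x. Vx x - x) 0 \<le> (\<lambda>x. Vx x - x) y"
    by (rule DERIV_nonneg_imp_nondecreasing[OF y])
       (use V'_ge1 in \<open>auto intro!: derivative_eq_intros dV1 exI\<close>)
  then show ?thesis using V_0 by simp
qed

lemma V_ge_L: "y \<ge> U \<Longrightarrow> Vx y \<ge> mu / rho + (y - U)"
proof -
  assume y: "y \<ge> U"
  have "(\<lambda>x. Vx x - x) U \<le> (\<lambda>x. Vx x - x) y"
    by (rule DERIV_nonneg_imp_nondecreasing[OF y])
       (use V'_ge1 in \<open>auto intro!: derivative_eq_intros dV1 exI\<close>)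
  then show ?thesis using V_U by simp
qed

lemma U_le: "U \<le> mu / rho"
proof (cases "U \<ge> 0")
  case True then show ?thesis using V_ge_id[OF True] V_U by simp
next
  case False
  have "mu / rho > 0" using mu rho by simp
  then show ?thesis using False by linarith
qed

end

context vparams
begin

lemma V0_eq: "V0 mu sg rho = Vx"
  unfolding V0_def U_def[symmetric]
proof (rule the_equality)
  show "\<exists>V' V''. (\<forall>x. (Vx has_real_derivative V' x) (at x)) \<and> (\<forall>x. (V' has_real_derivative V'' x) (at x)) \<and>
      (\<forall>x. sg\<^sup>2 / 2 * V'' x + mu * V' x - rho * Vx x = 0) \<and> Vx U = mu / rho \<and> V' U = 1"
    using dV1 dV2 V_ode V_U V'_U by blast
next
  fix V assume "\<exists>V' V''. (\<forall>x. (V has_real_derivative V' x) (at x)) \<and> (\<forall>x. (V' has_real_derivative V'' x) (at x)) \<and>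
      (\<forall>x. sg\<^sup>2 / 2 * V'' x + mu * V' x - rho * V x = 0) \<and> V U = mu / rho \<and> V' U = 1"
  then obtain V' V'' where d1: "\<And>x. (V has_real_derivative V' x) (at x)" and d2: "\<And>x. (V' has_real_derivative V'' x) (at x)"
    and ode: "\<And>x. sg\<^sup>2 / 2 * V'' x + mu * V' x - rho * V x = 0" and i0: "V U = mu / rho" and i1: "V' U = 1"
    by blast
  show "V = Vx"
  proof
    fix y
    have f1: "((\<lambda>x. V x - Vx x) has_real_derivative V' x - Vx' x) (at x)" for x
      by (intro derivative_intros d1 dV1)
    have f2: "((\<lambda>x. V' x - Vx' x) has_real_derivative V'' x - Vx'' x) (at x)" for x
      by (intro derivative_intros d2 dV2)
    have f3: "sg\<^sup>2 / 2 * (V'' x - Vx'' x) + mu * (V' x - Vx' x) - rho * (V x - Vx x) = 0" for x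
    proof -
      have "sg\<^sup>2 / 2 * (V'' x - Vx'' x) + mu * (V' x - Vx' x) - rho * (V x - Vx x)
        = (sg\<^sup>2 / 2 * V'' x + mu * V' x - rho * V x) - (sg\<^sup>2 / 2 * Vx'' x + mu * Vx' x - rho * Vx x)"
        by (simp add: field_simps)
      then show ?thesis using ode[of x] V_ode[of x] by simp
    qed
    have f4: "V U - Vx U = 0" using i0 V_U by simp
    have f5: "V' U - Vx' U = 0" using i1 V'_U by simp
    have "V y - Vx y = 0"
      using ode_unique[where D="\<lambda>x. V x - Vx x" and D'="\<lambda>x. V' x - Vx' x" and D''="\<lambda>x. V'' x - Vx'' x",
          OF sg rho mu f1 f2 f3 f4 f5] .
    then show "V y = Vx y" by simp
  qed
qed

lemma U_nonneg: "U \<ge> 0"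
proof -
  define Q where "Q = (rho + mu * R2) / (rho - mu * R1)"
  have "mu * R1 > 0" "mu * R2 > 0" using mu R1_pos R2_pos by simp_all
  then have "rho - mu * R1 \<le> rho + mu * R2" by simp
  then have "Q \<ge> 1" unfolding Q_def using rmr1 by simp
  then have "ln Q \<ge> 0" by simp
  moreover have "U = ln Q / (R1 + R2)" unfolding U_def u0_def Q_def R1_def R2_def by simp
  ultimately show ?thesis using sumpos by simp
qed

lemma part3_big:
  assumes "T > 0" "x \<ge> U"
  shows "h mu sg x T \<le> exp (rho * T) * Vx x"
proof -
  have x0: "x \<ge> 0" using U_nonneg assms by simp
  have "mu / rho - U + h mu sg x T \<le> exp (rho * T) * (x - U + mu / rho)"
    by (rule part2[OF mu sg rho assms(1,2) x0]) (use assms in simp)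
  moreover have "exp (rho * T) * (x - U + mu / rho) \<le> exp (rho * T) * Vx x"
    using V_ge_L[OF assms(2)] by simp
  moreover have "mu / rho - U \<ge> 0" using U_le by simp
  ultimately show ?thesis by linarith
qed

lemma cont_w:
  assumes "d > 0"
  shows "continuous_on ({0..U} \<times> {d..T}) (\<lambda>p. exp (rho * snd p) * Vx (fst p) - Hc mu sg (fst p) (snd p))"
  unfolding Vx_def Hc_def using assms sg
  by (intro continuous_intros) auto

lemma part3_small:
  assumes T: "T > 0" and x: "x \<ge> 0" "x < U" and d: "0 < d" "d < T"
  shows "exp (rho * T) * Vx x - Hc mu sg x T \<ge> - (mu * d)"
proof (rule maxprin[where w = "\<lambda>y s. exp (rho * s) * Vx y - Hc mu sg y s"
    and wx = "\<lambda>y s. exp (rho * s) * Vx' y - Hx mu sg y s"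
    and wxx = "\<lambda>y s. exp (rho * s) * Vx'' y - Hxx mu sg y s"
    and wt = "\<lambda>y s. rho * exp (rho * s) * Vx y - (mu - mu * hit_cdf mu sg y s)"
    and R = U and tz = d and T = T and a = "sg\<^sup>2 / 2" and b = mu])
  show "U > 0" using x by simp
  show "d < T" by (rule d(2))
  show "sg\<^sup>2 / 2 > 0" using sg by simp
  show "continuous_on ({0..U} \<times> {d..T}) (\<lambda>p. exp (rho * snd p) * Vx (fst p) - Hc mu sg (fst p) (snd p))"
    by (rule cont_w[OF d(1)])
  show "- (mu * d) \<le> exp (rho * t) * Vx 0 - Hc mu sg 0 t" if "t \<in> {d..T}" for t
    using that d Hc_zero[where t=t and sg=sg and mu=mu] sg V_0 mu by simp
  show "- (mu * d) \<le> exp (rho * t) * Vx U - Hc mu sg U t" if "t \<in> {d..T}" for t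
  proof -
    have t: "t > 0" using that d by simp
    have "Hc mu sg U t = h mu sg U t" using h_eq_Hc(1)[OF U_nonneg t sg mu] by simp
    then have "Hc mu sg U t \<le> exp (rho * t) * Vx U" using part3_big[OF t order_refl] by simp
    moreover have "mu * d \<ge> 0" using mu d by simp
    ultimately show ?thesis by simp
  qed
  show "- (mu * d) \<le> exp (rho * d) * Vx y - Hc mu sg y d" if "y \<in> {0..U}" for y
  proof -
    have y: "y \<ge> 0" using that by simp
    have "Hc mu sg y d = h mu sg y d" using h_eq_Hc(1)[OF y d(1) sg mu] by simp
    also have "\<dots> \<le> y + mu * d" by (rule h_le[OF y d(1) sg mu])
    finally have 1: "Hc mu sg y d \<le> y + mu * d" .
    have "y \<le> Vx y" by (rule V_ge_id[OF y])
    also have "Vx y \<le> exp (rho * d) * Vx y"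
    proof -
      have "Vx y \<ge> 0" using V_ge_id[OF y] y by simp
      moreover have "exp (rho * d) \<ge> 1" using rho d by simp
      ultimately show ?thesis by (simp add: mult_le_cancel_right1)
    qed
    finally show ?thesis using 1 by simp
  qed
  show "((\<lambda>y. exp (rho * s) * Vx y - Hc mu sg y s) has_real_derivative exp (rho * s) * Vx' y - Hx mu sg y s) (at y)"
    if "y \<in> {0<..<U}" "s \<in> {d<..T}" for y s
  proof -
    have "s > 0" using that d by simp
    then show ?thesis using DERIV_diff[OF DERIV_cmult[OF dV1] Hc_dx[OF _ sg]] by blast
  qed
  show "((\<lambda>y. exp (rho * s) * Vx' y - Hx mu sg y s) has_real_derivative exp (rho * s) * Vx'' y - Hxx mu sg y s) (at y)"
    if "y \<in> {0<..<U}" "s \<in> {d<..T}" for y s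
  proof -
    have "s > 0" using that d by simp
    then show ?thesis using DERIV_diff[OF DERIV_cmult[OF dV2] Hx_dx[OF _ sg]] by blast
  qed
  show "((\<lambda>s. exp (rho * s) * Vx y - Hc mu sg y s) has_real_derivative rho * exp (rho * s) * Vx y - (mu - mu * hit_cdf mu sg y s)) (at s)"
    if "y \<in> {0<..<U}" "s \<in> {d<..T}" for y s
    using that d by (auto intro!: derivative_eq_intros Hc_dt sg)
  show "rho * exp (rho * s) * Vx y - (mu - mu * hit_cdf mu sg y s)
      = sg\<^sup>2 / 2 * (exp (rho * s) * Vx'' y - Hxx mu sg y s) + mu * (exp (rho * s) * Vx' y - Hx mu sg y s)"
    if "y \<in> {0<..<U}" "s \<in> {d<..T}" for y s
  proof -
    have s: "s > 0" using that d by simp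
    have v: "rho * Vx y = sg\<^sup>2 / 2 * Vx'' y + mu * Vx' y" using V_ode[of y] by simp
    have ve: "rho * exp (rho * s) * Vx y = exp (rho * s) * (sg\<^sup>2 / 2 * Vx'' y + mu * Vx' y)"
      unfolding v[symmetric] by simp
    have "rho * exp (rho * s) * Vx y - (mu - mu * hit_cdf mu sg y s)
       = exp (rho * s) * (sg\<^sup>2 / 2 * Vx'' y + mu * Vx' y) - (sg\<^sup>2 / 2 * Hxx mu sg y s + mu * Hx mu sg y s)"
      unfolding ve Hc_pde[OF s sg, of mu y] ..
    also have "\<dots> = sg\<^sup>2 / 2 * (exp (rho * s) * Vx'' y - Hxx mu sg y s) + mu * (exp (rho * s) * Vx' y - Hx mu sg y s)"
      by (simp add: algebra_simps)
    finally show ?thesis .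
  qed
  show "x \<in> {0..U}" using x by simp
  show "T \<in> {d..T}" using d by simp
qed

lemma part3:
  assumes T: "T > 0" and x: "x \<ge> 0"
  shows "h mu sg x T \<le> exp (rho * T) * Vx x"
proof (cases "x \<ge> U")
  case True then show ?thesis by (rule part3_big[OF T])
next
  case False
  then have xU: "x < U" by simp
  have hc: "h mu sg x T = Hc mu sg x T" by (rule h_eq_Hc(1)[OF x T sg mu])
  show ?thesis
  proof (rule ccontr)
    assume "\<not> ?thesis"
    then have gap: "Hc mu sg x T - exp (rho * T) * Vx x > 0" using hc by simp
    define g where "g = Hc mu sg x T - exp (rho * T) * Vx x"
    define d where "d = min (T / 2) (g / (2 * mu))"
    have d: "0 < d" "d < T" using T gap mu by (auto simp: d_def g_def min_def field_simps)
    have "mu * d \<le> g / 2" using mu gap by (auto simp: d_def g_def min_def field_simps)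
    moreover have "exp (rho * T) * Vx x - Hc mu sg x T \<ge> - (mu * d)" by (rule part3_small[OF T x xU d])
    ultimately show False using gap by (simp add: g_def field_simps)
  qed
qed

end

theorem lemma2p1:
  fixes mu sg rho :: real
  assumes "mu > 0" and "sg > 0" and "rho > 0"
  shows "(\<forall>t>0. concave_on {0<..} (\<lambda>x. h mu sg x t))
    \<and> (\<forall>t>0. \<forall>x\<ge>u0 mu sg rho.
          mu / rho - u0 mu sg rho + h mu sg x t
            \<le> exp (rho * t) * (x - u0 mu sg rho + mu / rho))
    \<and> (\<forall>t>0. \<forall>x\<ge>0. h mu sg x t \<le> exp (rho * t) * V0 mu sg rho x)"
proof -
  interpret vparams mu sg rho using assms by unfold_locales
  have c1: "\<forall>t>0. concave_on {0<..} (\<lambda>x. h mu sg x t)"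
    using h_concave[OF assms(1,2)] by blast
  have c2: "\<forall>t>0. \<forall>x\<ge>u0 mu sg rho. mu / rho - u0 mu sg rho + h mu sg x t
            \<le> exp (rho * t) * (x - u0 mu sg rho + mu / rho)"
  proof (intro allI impI)
    fix t x :: real assume t: "t > 0" and x: "x \<ge> u0 mu sg rho"
    have x0: "x \<ge> 0" using U_nonneg x unfolding U_def by simp
    show "mu / rho - u0 mu sg rho + h mu sg x t \<le> exp (rho * t) * (x - u0 mu sg rho + mu / rho)"
      by (rule part2[OF assms t x x0]) (use x in simp)
  qed
  have c3: "\<forall>t>0. \<forall>x\<ge>0. h mu sg x t \<le> exp (rho * t) * V0 mu sg rho x"
    using part3 V0_eq by simp
  show ?thesis using c1 c2 c3 by blast
qed

end
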